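(* Let $Z_i=(X_i,Y_i)$, $i=1,\dots,n+1$, be i.i.d. from a distribution $\mathcal P_{XY}$ on $\mathbb R^p\times\mathbb R$ (calibration samples $Z_1,\dots,Z_n$ and test sample $Z_{n+1}$), and let $V(\cdot)$ be a fixed (non-random, data-independent) real-valued score function, $V_i=V(Z_i)$. Let $H:\mathbb R^p\times\mathbb R^p\to[0,1]$ be a localizer depending on the data only through the unordered set $\{X_1,\dots,X_{n+1}\}$, with $H(x,x)=1$; put $H_{ij}=H(X_i,X_j)$, $p^H_{ij}=H_{ij}/\sum_{k=1}^{n+1}H_{ik}$ and $\Gamma=\{\sum_{k\in I}p^H_{ik}: i\in\{1,\dots,n+1\},\ I\subseteq\{1,\dots,n+1\}\}$. For $v\in\mathbb R$ let $\hat{\mathcal F}_i(v)=\sum_{j=1}^{n}p^H_{ij}\delta_{V_j}+p^H_{i,n+1}\delta_v$ ($i=1,\dots,n+1$), and $\hat{\mathcal F}=\sum_{j=1}^{n}p^H_{n+1,j}\delta_{V_j}+p^H_{n+1,n+1}\delta_{+\infty}$. Fix $\alpha\in(0,1)$. For each $v$, let $\tilde\alpha(v)$ be the smallest $\tilde\alpha\in\Gamma$ such that $$\frac{1}{n+1}\sum_{i=1}^{n+1}\mathbb 1\{V_i\le Q(\tilde\alpha;\hat{\mathcal F}_i(v))\}\ge\alpha,$$ where in this sum $V_{n+1}$ is set equal to $v$. Set $C_V(X_{n+1})=\{v: v\le Q(\tilde\alpha(v);\hat{\mathcal F})\}$ and $C(X_{n+1})=\{y: V(X_{n+1},y)\in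 C_V(X_{n+1})\}$. Then $C_V(X_{n+1})$ is an interval, and $$\mathbb P\{V_{n+1}\in C_V(X_{n+1})\}\ge\alpha,\qquad \mathbb P\{Y_{n+1}\in C(X_{n+1})\}\ge\alpha.$$
   Context: For a distribution $\mathcal F$ on $\mathbb R\cup\{+\infty\}$, $Q(\alpha;\mathcal F)=\inf\{t:\mathbb P_{T\sim\mathcal F}(T\le t)\ge\alpha\}$; $\delta_v$ is the point mass at $v$. *)

theory Defs
  imports "HOL-Probability.Probability"
begin

text \<open>Data: \<omega> i = Z_i = (X_i, Y_i) for i = 1..n+1; index n+1 is the test point.
  Localizer H S x y, where S is the unordered set {X_1,...,X_{n+1}}.
  Score function V x y, so V_i = V X_i Y_i.\<close>

definition Xset :: "nat \<Rightarrow> (nat \<Rightarrow> 'x \<times> real) \<Rightarrow> 'x set" where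
  "Xset n \<omega> = (\<lambda>i. fst (\<omega> i)) ` {1..n+1}"

definition Hmat :: "('x set \<Rightarrow> 'x \<Rightarrow> 'x \<Rightarrow> real) \<Rightarrow> nat \<Rightarrow> (nat \<Rightarrow> 'x \<times> real) \<Rightarrow> nat \<Rightarrow> nat \<Rightarrow> real" where
  "Hmat H n \<omega> i j = H (Xset n \<omega>) (fst (\<omega> i)) (fst (\<omega> j))"

definition pH :: "('x set \<Rightarrow> 'x \<Rightarrow> 'x \<Rightarrow> real) \<Rightarrow> nat \<Rightarrow> (nat \<Rightarrow> 'x \<times> real) \<Rightarrow> nat \<Rightarrow> nat \<Rightarrow> real" where
  "pH H n \<omega> i j = Hmat H n \<omega> i j / (\<Sum>k=1..n+1. Hmat H n \<omega> i k)"

definition Gamma :: "('x set \<Rightarrow> 'x \<Rightarrow> 'x \<Rightarrow> real) \<Rightarrow> nat \<Rightarrow> (nat \<Rightarrow> 'x \<times> real) \<Rightarrow> real set" where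
  "Gamma H n \<omega> = {(\<Sum>k\<in>I. pH H n \<omega> i k) | i I. i \<in> {1..n+1} \<and> I \<subseteq> {1..n+1}}"

text \<open>Quantile Q(a; F) of the discrete distribution F = sum over j in J of w j * delta_(t j)
  on the extended reals: Inf {s. P(T \<le> s) \<ge> a}.\<close>
definition quantile :: "real \<Rightarrow> (nat \<Rightarrow> real) \<Rightarrow> (nat \<Rightarrow> ereal) \<Rightarrow> nat set \<Rightarrow> ereal" where
  "quantile a w t J = Inf {s. (\<Sum>j\<in>{j\<in>J. t j \<le> s}. w j) \<ge> a}"

definition score :: "('x \<Rightarrow> real \<Rightarrow> real) \<Rightarrow> (nat \<Rightarrow> 'x \<times> real) \<Rightarrow> nat \<Rightarrow> real" where
  "score V \<omega> i = V (fst (\<omega> i)) (snd (\<omega> i))"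

definition Fpts :: "('x \<Rightarrow> real \<Rightarrow> real) \<Rightarrow> nat \<Rightarrow> (nat \<Rightarrow> 'x \<times> real) \<Rightarrow> real \<Rightarrow> nat \<Rightarrow> ereal" where
  "Fpts V n \<omega> v j = (if j = n+1 then ereal v else ereal (score V \<omega> j))"

definition Fhatpts :: "('x \<Rightarrow> real \<Rightarrow> real) \<Rightarrow> nat \<Rightarrow> (nat \<Rightarrow> 'x \<times> real) \<Rightarrow> nat \<Rightarrow> ereal" where
  "Fhatpts V n \<omega> j = (if j = n+1 then \<infinity> else ereal (score V \<omega> j))"

definition Vaug :: "('x \<Rightarrow> real \<Rightarrow> real) \<Rightarrow> nat \<Rightarrow> (nat \<Rightarrow> 'x \<times> real) \<Rightarrow> real \<Rightarrow> nat \<Rightarrow> real" where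
  "Vaug V n \<omega> v i = (if i = n+1 then v else score V \<omega> i)"

definition alpha_ok ::
  "('x set \<Rightarrow> 'x \<Rightarrow> 'x \<Rightarrow> real) \<Rightarrow> ('x \<Rightarrow> real \<Rightarrow> real) \<Rightarrow> nat \<Rightarrow> real \<Rightarrow> (nat \<Rightarrow> 'x \<times> real) \<Rightarrow> real \<Rightarrow> real \<Rightarrow> bool" where
  "alpha_ok H V n \<alpha> \<omega> v a \<longleftrightarrow>
     (1 / real (n+1)) * (\<Sum>i=1..n+1. if ereal (Vaug V n \<omega> v i) \<le> quantile a (pH H n \<omega> i) (Fpts V n \<omega> v) {1..n+1} then 1 else 0) \<ge> \<alpha>"

definition alpha_tilde ::
  "('x set \<Rightarrow> 'x \<Rightarrow> 'x \<Rightarrow> real) \<Rightarrow> ('x \<Rightarrow> real \<Rightarrow> real) \<Rightarrow> nat \<Rightarrow> real \<Rightarrow> (nat \<Rightarrow> 'x \<times> real) \<Rightarrow> real \<Rightarrow> real" where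
  "alpha_tilde H V n \<alpha> \<omega> v = Min {a \<in> Gamma H n \<omega>. alpha_ok H V n \<alpha> \<omega> v a}"

definition CV ::
  "('x set \<Rightarrow> 'x \<Rightarrow> 'x \<Rightarrow> real) \<Rightarrow> ('x \<Rightarrow> real \<Rightarrow> real) \<Rightarrow> nat \<Rightarrow> real \<Rightarrow> (nat \<Rightarrow> 'x \<times> real) \<Rightarrow> real set" where
  "CV H V n \<alpha> \<omega> = {v. ereal v \<le> quantile (alpha_tilde H V n \<alpha> \<omega> v) (pH H n \<omega> (n+1)) (Fhatpts V n \<omega>) {1..n+1}}"

definition Cset ::
  "('x set \<Rightarrow> 'x \<Rightarrow> 'x \<Rightarrow> real) \<Rightarrow> ('x \<Rightarrow> real \<Rightarrow> real) \<Rightarrow> nat \<Rightarrow> real \<Rightarrow> (nat \<Rightarrow> 'x \<times> real) \<Rightarrow> real set" where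
  "Cset H V n \<alpha> \<omega> = {y. V (fst (\<omega> (n+1))) y \<in> CV H V n \<alpha> \<omega>}"

end

theory Submission
  imports Defs
begin

lemma quant_char:
  fixes w :: "nat \<Rightarrow> real" and t :: "nat \<Rightarrow> ereal"
  assumes J: "finite J" and w: "\<And>j. j \<in> J \<Longrightarrow> 0 \<le> w j"
  shows "(ereal x \<le> quantile a w t J) \<longleftrightarrow> (\<Sum>j\<in>J. if t j < ereal x then w j else 0) < a"
proof -
  have eq: "(\<Sum>j\<in>J. if t j < ereal x then w j else 0) = (\<Sum>j\<in>{j\<in>J. t j < ereal x}. w j)"
    using J by (simp add: sum.inter_filter)
  show ?thesis
  proof
    assume h: "ereal x \<le> quantile a w t J"
    define s where "s = Max (insert (-\<infinity>) (t ` {j\<in>J. t j < ereal x}))"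
    have fin: "finite (insert (-\<infinity>) (t ` {j\<in>J. t j < ereal x}))" using J by auto
    have slt: "s < ereal x" unfolding s_def using fin by (subst Max_less_iff) auto
    have "{j\<in>J. t j \<le> s} = {j\<in>J. t j < ereal x}"
    proof (intro set_eqI iffI)
      fix j assume "j \<in> {j\<in>J. t j \<le> s}" then show "j \<in> {j\<in>J. t j < ereal x}" using slt by auto
    next
      fix j assume j: "j \<in> {j\<in>J. t j < ereal x}"
      have "t j \<le> s" unfolding s_def using fin j by (intro Max_ge) auto
      then show "j \<in> {j\<in>J. t j \<le> s}" using j by auto
    qed
    moreover have "\<not> (\<Sum>j\<in>{j\<in>J. t j \<le> s}. w j) \<ge> a"
    proof
      assume "(\<Sum>j\<in>{j\<in>J. t j \<le> s}. w j) \<ge> a"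
      then have "quantile a w t J \<le> s" unfolding quantile_def by (intro Inf_lower) auto
      with h slt show False by simp
    qed
    ultimately show "(\<Sum>j\<in>J. if t j < ereal x then w j else 0) < a" using eq by simp
  next
    assume h: "(\<Sum>j\<in>J. if t j < ereal x then w j else 0) < a"
    show "ereal x \<le> quantile a w t J" unfolding quantile_def
    proof (rule Inf_greatest)
      fix s assume "s \<in> {s. a \<le> (\<Sum>j\<in>{j \<in> J. t j \<le> s}. w j)}"
      then have as: "a \<le> (\<Sum>j\<in>{j \<in> J. t j \<le> s}. w j)" by simp
      show "ereal x \<le> s"
      proof (rule ccontr)
        assume "\<not> ereal x \<le> s"
        then have "s < ereal x" by simp
        then have "{j \<in> J. t j \<le> s} \<subseteq> {j\<in>J. t j < ereal x}" by auto
        then have "(\<Sum>j\<in>{j \<in> J. t j \<le> s}. w j) \<le> (\<Sum>j\<in>{j\<in>J. t j < ereal x}. w j)"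
          using J w by (intro sum_mono2) auto
        with as h eq show False by simp
      qed
    qed
  qed
qed


definition ws :: "('x set \<Rightarrow> 'x \<Rightarrow> 'x \<Rightarrow> real) \<Rightarrow> nat \<Rightarrow> (nat \<Rightarrow> 'x \<times> real) \<Rightarrow> (nat \<Rightarrow> real) \<Rightarrow> nat \<Rightarrow> real" where
  "ws H n \<omega> u i = (\<Sum>j=1..n+1. if u j < u i then pH H n \<omega> i j else 0)"

definition cnt :: "('x set \<Rightarrow> 'x \<Rightarrow> 'x \<Rightarrow> real) \<Rightarrow> nat \<Rightarrow> (nat \<Rightarrow> 'x \<times> real) \<Rightarrow> (nat \<Rightarrow> real) \<Rightarrow> real \<Rightarrow> real" where
  "cnt H n \<omega> u a = (\<Sum>i=1..n+1. if ws H n \<omega> u i < a then 1 else 0)"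

context
  fixes H :: "'x set \<Rightarrow> 'x \<Rightarrow> 'x \<Rightarrow> real"
  assumes Hr: "\<And>S x y. 0 \<le> H S x y \<and> H S x y \<le> 1"
    and Hd: "\<And>S x. H S x x = 1"
begin

lemma pH_nonneg:
  shows "0 \<le> pH H n \<omega> i j"
  unfolding pH_def Hmat_def using Hr by (intro divide_nonneg_nonneg sum_nonneg) auto

lemma denom_pos:
  assumes "i \<in> {1..n+1}"
  shows "1 \<le> (\<Sum>k=1..n+1. Hmat H n \<omega> i k)"
proof -
  have "Hmat H n \<omega> i i \<le> (\<Sum>k=1..n+1. Hmat H n \<omega> i k)"
    using assms Hr by (intro member_le_sum) (auto simp: Hmat_def)
  moreover have "Hmat H n \<omega> i i = 1" unfolding Hmat_def by (rule Hd)
  ultimately show ?thesis by simp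
qed

lemma pH_rowsum:
  assumes "i \<in> {1..n+1}"
  shows "(\<Sum>k=1..n+1. pH H n \<omega> i k) = 1"
  using denom_pos[OF assms, where \<omega>=\<omega>] unfolding pH_def by (simp add: sum_divide_distrib[symmetric])

lemma pH_diag_pos:
  assumes "i \<in> {1..n+1}"
  shows "0 < pH H n \<omega> i i"
proof -
  have "Hmat H n \<omega> i i = 1" unfolding Hmat_def by (rule Hd)
  then show ?thesis using denom_pos[OF assms, where \<omega>=\<omega>] unfolding pH_def by simp
qed

lemma ws_lt1:
  assumes "i \<in> {1..n+1}"
  shows "ws H n \<omega> u i < 1"
proof -
  have "ws H n \<omega> u i = (\<Sum>j\<in>{1..n+1}-{i}. if u j < u i then pH H n \<omega> i j else 0)"
    unfolding ws_def using assms by (subst sum.remove[of _ i]) auto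
  also have "\<dots> \<le> (\<Sum>j\<in>{1..n+1}-{i}. pH H n \<omega> i j)"
    using pH_nonneg by (intro sum_mono) auto
  also have "\<dots> = 1 - pH H n \<omega> i i"
    using pH_rowsum[OF assms] assms by (subst sum_diff1) auto
  finally show ?thesis using pH_diag_pos[OF assms, where \<omega>=\<omega>] by simp
qed

lemma cnt_one:
  shows "cnt H n \<omega> u 1 = real (n+1)"
  unfolding cnt_def using ws_lt1 by simp

lemma alpha_ok_eq:
  shows "alpha_ok H V n \<alpha> \<omega> v a \<longleftrightarrow> \<alpha> \<le> (1 / real (n+1)) * cnt H n \<omega> (Vaug V n \<omega> v) a"
proof -
  have F: "Fpts V n \<omega> v = (\<lambda>j. ereal (Vaug V n \<omega> v j))"
    by (auto simp: Fpts_def Vaug_def)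
  show ?thesis unfolding alpha_ok_def cnt_def F ws_def
    by (subst quant_char) (auto simp: pH_nonneg)
qed

lemma Gamma_eq: "Gamma H n \<omega> = (\<lambda>(i,I). \<Sum>k\<in>I. pH H n \<omega> i k) ` ({1..n+1} \<times> Pow {1..n+1})"
  unfolding Gamma_def by (auto simp: image_def) blast

lemma Gamma_finite: "finite (Gamma H n \<omega>)"
  unfolding Gamma_eq by auto

lemma one_Gamma:
  shows "1 \<in> Gamma H n \<omega>"
  unfolding Gamma_def using pH_rowsum[where i="n+1" and n=n and \<omega>=\<omega>]
  by (auto intro!: exI[of _ "n+1"] exI[of _ "{1..n+1}"])

lemma alpha_tilde_props:
  assumes "\<alpha> < 1"
  shows "alpha_tilde H V n \<alpha> \<omega> v \<in> {a \<in> Gamma H n \<omega>. alpha_ok H V n \<alpha> \<omega> v a}"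
    and "\<And>a. a \<in> Gamma H n \<omega> \<Longrightarrow> alpha_ok H V n \<alpha> \<omega> v a \<Longrightarrow> alpha_tilde H V n \<alpha> \<omega> v \<le> a"
proof -
  have fin: "finite {a \<in> Gamma H n \<omega>. alpha_ok H V n \<alpha> \<omega> v a}" using Gamma_finite by auto
  have "1 \<in> {a \<in> Gamma H n \<omega>. alpha_ok H V n \<alpha> \<omega> v a}"
    using one_Gamma cnt_one assms
    by (simp add: alpha_ok_eq)
  then have ne: "{a \<in> Gamma H n \<omega>. alpha_ok H V n \<alpha> \<omega> v a} \<noteq> {}" by blast
  show "alpha_tilde H V n \<alpha> \<omega> v \<in> {a \<in> Gamma H n \<omega>. alpha_ok H V n \<alpha> \<omega> v a}"
    unfolding alpha_tilde_def using Min_in[OF fin ne] .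
  show "\<And>a. a \<in> Gamma H n \<omega> \<Longrightarrow> alpha_ok H V n \<alpha> \<omega> v a \<Longrightarrow> alpha_tilde H V n \<alpha> \<omega> v \<le> a"
    unfolding alpha_tilde_def using fin by (intro Min_le) auto
qed

lemma CV_char:
  shows "v \<in> CV H V n \<alpha> \<omega> \<longleftrightarrow> ws H n \<omega> (Vaug V n \<omega> v) (n+1) < alpha_tilde H V n \<alpha> \<omega> v"
proof -
  have "(\<Sum>j=1..n+1. if Fhatpts V n \<omega> j < ereal v then pH H n \<omega> (n+1) j else 0)
       = ws H n \<omega> (Vaug V n \<omega> v) (n+1)"
    unfolding ws_def by (intro sum.cong) (auto simp: Fhatpts_def Vaug_def)
  then show ?thesis unfolding CV_def
    by (subst quant_char) (auto simp: pH_nonneg)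
qed

lemma CV_down:
  assumes A: "\<alpha> < 1"
    and v23: "v2 < v3" and nv2: "v2 \<notin> CV H V n \<alpha> \<omega>"
  shows "v3 \<notin> CV H V n \<alpha> \<omega>"
proof -
  define a2 where "a2 = alpha_tilde H V n \<alpha> \<omega> v2"
  note P2 = alpha_tilde_props[OF A, where n=n and \<omega>=\<omega> and v=v2 and V=V]
  have a2G: "a2 \<in> Gamma H n \<omega>" and ok2: "alpha_ok H V n \<alpha> \<omega> v2 a2" using P2(1) by (auto simp: a2_def)
  have ge: "a2 \<le> ws H n \<omega> (Vaug V n \<omega> v2) (n+1)" using nv2 CV_char by (simp add: a2_def)
  have wsmono: "ws H n \<omega> (Vaug V n \<omega> v3) i \<le> ws H n \<omega> (Vaug V n \<omega> v2) i" if "i \<noteq> n+1" for i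
    unfolding ws_def using that v23 pH_nonneg
    by (intro sum_mono) (auto simp: Vaug_def)
  have wsmono2: "ws H n \<omega> (Vaug V n \<omega> v2) (n+1) \<le> ws H n \<omega> (Vaug V n \<omega> v3) (n+1)"
    unfolding ws_def using v23 pH_nonneg
    by (intro sum_mono) (auto simp: Vaug_def)
  have "cnt H n \<omega> (Vaug V n \<omega> v2) a2 \<le> cnt H n \<omega> (Vaug V n \<omega> v3) a2"
    unfolding cnt_def
  proof (intro sum_mono)
    fix i assume "i \<in> {1..n+1}"
    show "(if ws H n \<omega> (Vaug V n \<omega> v2) i < a2 then 1 else 0)
        \<le> (if ws H n \<omega> (Vaug V n \<omega> v3) i < a2 then 1 else (0::real))"
    proof (cases "i = n+1")
      case True then show ?thesis using ge by auto
    next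
      case False then show ?thesis using wsmono[OF False] by auto
    qed
  qed
  then have "alpha_ok H V n \<alpha> \<omega> v3 a2" using ok2 unfolding alpha_ok_eq
    by (smt (verit) divide_nonneg_nonneg mult_left_mono of_nat_0_le_iff)
  then have "alpha_tilde H V n \<alpha> \<omega> v3 \<le> a2" using alpha_tilde_props(2)[OF A a2G] by blast
  then show ?thesis using CV_char ge wsmono2 by fastforce
qed

lemma CV_interval:
  assumes A: "\<alpha> < 1"
  shows "is_interval (CV H V n \<alpha> \<omega>)"
  unfolding is_interval_1
proof (intro ballI allI impI)
  fix a b x assume ab: "a \<in> CV H V n \<alpha> \<omega>" "b \<in> CV H V n \<alpha> \<omega>" "a \<le> x \<and> x \<le> b"
  show "x \<in> CV H V n \<alpha> \<omega>"
  proof (rule ccontr)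
    assume nx: "x \<notin> CV H V n \<alpha> \<omega>"
    then have "x \<noteq> b" using ab by auto
    then have "x < b" using ab by auto
    then show False using CV_down[OF A \<open>x < b\<close> nx] ab by auto
  qed
qed

end


context
  fixes \<tau> :: "nat \<Rightarrow> nat" and n :: nat
  assumes inv: "\<And>k. k \<in> {1..n+1} \<Longrightarrow> \<tau> k \<in> {1..n+1} \<and> \<tau> (\<tau> k) = k"
begin

lemma tau_bij: "bij_betw \<tau> {1..n+1} {1..n+1}"
  by (rule bij_betwI[where g=\<tau>]) (use inv in auto)

lemma tau_img: "\<tau> ` {1..n+1} = {1..n+1}"
  using tau_bij by (simp add: bij_betw_def)

lemma reidx: "(\<Sum>j=1..n+1. g (\<tau> j)) = (\<Sum>j=1..n+1. (g j :: real))"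
  using sum.reindex_bij_betw[OF tau_bij] .

context
  fixes \<omega> \<omega>' :: "nat \<Rightarrow> 'x \<times> real"
  assumes om: "\<And>k. k \<in> {1..n+1} \<Longrightarrow> \<omega>' k = \<omega> (\<tau> k)"
begin

lemma Xset_perm: "Xset n \<omega>' = Xset n \<omega>"
proof -
  have "Xset n \<omega>' = (\<lambda>i. fst (\<omega> i)) ` (\<tau> ` {1..n+1})"
    unfolding Xset_def image_image using om by (intro image_cong) auto
  then show ?thesis unfolding tau_img Xset_def .
qed

lemma Hmat_perm: "i \<in> {1..n+1} \<Longrightarrow> j \<in> {1..n+1} \<Longrightarrow> Hmat H n \<omega>' i j = Hmat H n \<omega> (\<tau> i) (\<tau> j)"
  unfolding Hmat_def Xset_perm using om by simp

lemma pH_perm: "i \<in> {1..n+1} \<Longrightarrow> j \<in> {1..n+1} \<Longrightarrow> pH H n \<omega>' i j = pH H n \<omega> (\<tau> i) (\<tau> j)"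
proof -
  assume ij: "i \<in> {1..n+1}" "j \<in> {1..n+1}"
  have "(\<Sum>k=1..n+1. Hmat H n \<omega>' i k) = (\<Sum>k=1..n+1. Hmat H n \<omega> (\<tau> i) (\<tau> k))"
    using ij by (intro sum.cong) (auto simp: Hmat_perm)
  also have "\<dots> = (\<Sum>k=1..n+1. Hmat H n \<omega> (\<tau> i) k)" by (rule reidx)
  finally show ?thesis unfolding pH_def using ij by (simp add: Hmat_perm)
qed

lemma score_perm: "k \<in> {1..n+1} \<Longrightarrow> score V \<omega>' k = score V \<omega> (\<tau> k)"
  unfolding score_def using om by simp

lemma ws_perm: "k \<in> {1..n+1} \<Longrightarrow> ws H n \<omega>' (score V \<omega>') k = ws H n \<omega> (score V \<omega>) (\<tau> k)"
proof -
  assume k: "k \<in> {1..n+1}"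
  have "ws H n \<omega>' (score V \<omega>') k = (\<Sum>j=1..n+1. (\<lambda>j. if score V \<omega> j < score V \<omega> (\<tau> k) then pH H n \<omega> (\<tau> k) j else 0) (\<tau> j))"
    unfolding ws_def using k by (intro sum.cong) (auto simp: score_perm pH_perm)
  also have "\<dots> = ws H n \<omega> (score V \<omega>) (\<tau> k)" unfolding ws_def by (rule reidx)
  finally show ?thesis .
qed

lemma cnt_perm: "cnt H n \<omega>' (score V \<omega>') a = cnt H n \<omega> (score V \<omega>) a"
proof -
  have "cnt H n \<omega>' (score V \<omega>') a = (\<Sum>i=1..n+1. (\<lambda>i. if ws H n \<omega> (score V \<omega>) i < a then 1 else 0) (\<tau> i))"
    unfolding cnt_def by (intro sum.cong) (auto simp: ws_perm)
  also have "\<dots> = cnt H n \<omega> (score V \<omega>) a" unfolding cnt_def by (rule reidx)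
  finally show ?thesis .
qed

lemma Gamma_perm: "Gamma H n \<omega>' = Gamma H n \<omega>"
proof -
  have key: "(\<Sum>k\<in>I. pH H n \<omega>' i k) = (\<Sum>k\<in>\<tau> ` I. pH H n \<omega> (\<tau> i) k)"
    if "i \<in> {1..n+1}" "I \<subseteq> {1..n+1}" for i I
  proof -
    have bI: "bij_betw \<tau> I (\<tau> ` I)"
      using tau_bij that by (meson bij_betw_subset)
    have "(\<Sum>k\<in>I. pH H n \<omega>' i k) = (\<Sum>k\<in>I. pH H n \<omega> (\<tau> i) (\<tau> k))"
      using that by (intro sum.cong) (auto simp: pH_perm)
    also have "\<dots> = (\<Sum>k\<in>\<tau> ` I. pH H n \<omega> (\<tau> i) k)"
      using sum.reindex_bij_betw[OF bI] .
    finally show ?thesis .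
  qed
  show ?thesis
  proof (intro set_eqI iffI)
    fix a assume "a \<in> Gamma H n \<omega>'"
    then obtain i I where iI: "a = (\<Sum>k\<in>I. pH H n \<omega>' i k)" "i \<in> {1..n+1}" "I \<subseteq> {1..n+1}"
      unfolding Gamma_def by blast
    have "\<tau> i \<in> {1..n+1}" "\<tau> ` I \<subseteq> {1..n+1}" using inv iI by auto
    then show "a \<in> Gamma H n \<omega>" unfolding Gamma_def iI(1) key[OF iI(2,3)] by blast
  next
    fix a assume "a \<in> Gamma H n \<omega>"
    then obtain i I where iI: "a = (\<Sum>k\<in>I. pH H n \<omega> i k)" "i \<in> {1..n+1}" "I \<subseteq> {1..n+1}"
      unfolding Gamma_def by blast
    have ti: "\<tau> i \<in> {1..n+1}" "\<tau> ` I \<subseteq> {1..n+1}" using inv iI by auto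
    have "\<tau> ` \<tau> ` I = I" using inv iI(3) by (force simp: image_image)
    moreover have "\<tau> (\<tau> i) = i" using inv iI by auto
    ultimately have "a = (\<Sum>k\<in>\<tau> ` I. pH H n \<omega>' (\<tau> i) k)" unfolding key[OF ti] iI(1) by simp
    then show "a \<in> Gamma H n \<omega>'" unfolding Gamma_def using ti by blast
  qed
qed

end
end

lemma Vaug_self: "Vaug V n \<omega> (score V \<omega> (n+1)) = score V \<omega>"
  by (auto simp: Vaug_def)


lemma at_perm:
  fixes H :: "'x set \<Rightarrow> 'x \<Rightarrow> 'x \<Rightarrow> real"
  assumes Hr: "\<And>S x y. 0 \<le> H S x y \<and> H S x y \<le> 1" and Hd: "\<And>S x. H S x x = 1"
    and inv: "\<And>k. k \<in> {1..n+1} \<Longrightarrow> \<tau> k \<in> {1..n+1} \<and> \<tau> (\<tau> k) = k"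
    and om: "\<And>k. k \<in> {1..n+1} \<Longrightarrow> \<omega>' k = \<omega> (\<tau> k)"
  shows "alpha_tilde H V n \<alpha> \<omega>' (score V \<omega>' (n+1)) = alpha_tilde H V n \<alpha> \<omega> (score V \<omega> (n+1))"
  unfolding alpha_tilde_def alpha_ok_eq[where H=H, OF Hr Hd] Vaug_self
  using Gamma_perm[where \<tau>=\<tau> and n=n and \<omega>=\<omega> and \<omega>'=\<omega>', OF inv om] cnt_perm[where \<tau>=\<tau> and n=n and \<omega>=\<omega> and \<omega>'=\<omega>', OF inv om] by simp

theorem lemma1:
  fixes P :: "((real ^ ('p::finite)) \<times> real) measure"
    and V :: "real ^ 'p \<Rightarrow> real \<Rightarrow> real"
    and H :: "(real ^ 'p) set \<Rightarrow> real ^ 'p \<Rightarrow> real ^ 'p \<Rightarrow> real"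
    and n :: nat and \<alpha> :: real
  assumes P: "prob_space P" and sets_P: "sets P = sets borel"
    and V_meas: "case_prod V \<in> borel_measurable borel"
    and H_range: "\<And>S x y. 0 \<le> H S x y \<and> H S x y \<le> 1"
    and H_diag: "\<And>S x. H S x x = 1"
    and H_meas: "\<And>i j. i \<in> {1..n+1} \<Longrightarrow> j \<in> {1..n+1} \<Longrightarrow>
        (\<lambda>\<omega>. Hmat H n \<omega> i j) \<in> borel_measurable (PiM {1..n+1} (\<lambda>_. P))"
    and \<alpha>: "0 < \<alpha>" "\<alpha> < 1"
  shows "(\<forall>\<omega>\<in>space (PiM {1..n+1} (\<lambda>_. P)). is_interval (CV H V n \<alpha> \<omega>))
    \<and> measure (PiM {1..n+1} (\<lambda>_. P))
        {\<omega> \<in> space (PiM {1..n+1} (\<lambda>_. P)). score V \<omega> (n+1) \<in> CV H V n \<alpha> \<omega>} \<ge> \<alpha>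
    \<and> measure (PiM {1..n+1} (\<lambda>_. P))
        {\<omega> \<in> space (PiM {1..n+1} (\<lambda>_. P)). snd (\<omega> (n+1)) \<in> Cset H V n \<alpha> \<omega>} \<ge> \<alpha>"
proof -
  let ?I = "{1..n+1::nat}"
  let ?M = "PiM {1..n+1::nat} (\<lambda>_. P)"
  note Hr = H_range and Hd = H_diag
  interpret M: prob_space ?M by (intro prob_space_PiM P)
  define atl where "atl \<omega> = alpha_tilde H V n \<alpha> \<omega> (score V \<omega> (n+1))" for \<omega>
  define E where "E i = {\<omega> \<in> space ?M. ws H n \<omega> (score V \<omega>) i < atl \<omega>}" for i
  define G where "G = ?I \<times> Pow ?I"
  define c where "c g \<omega> = (\<Sum>k\<in>snd g. pH H n \<omega> (fst g) k)" for g \<omega>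
  define ok where "ok \<omega> a \<longleftrightarrow> \<alpha> \<le> (1 / real (n+1)) * cnt H n \<omega> (score V \<omega>) a" for \<omega> a
  have Vm: "case_prod V \<in> borel_measurable P"
    using V_meas measurable_cong_sets[OF sets_P refl] by blast
  have sc_m: "(\<lambda>\<omega>. score V \<omega> i) \<in> borel_measurable ?M" if "i \<in> ?I" for i
  proof -
    have "(\<lambda>\<omega>. case_prod V (\<omega> i)) \<in> borel_measurable ?M"
      by (rule measurable_compose[OF measurable_component_singleton[OF that] Vm])
    then show ?thesis unfolding score_def by (simp add: case_prod_beta)
  qed
  have pH_m: "(\<lambda>\<omega>. pH H n \<omega> i j) \<in> borel_measurable ?M" if "i \<in> ?I" "j \<in> ?I" for i j
    unfolding pH_def using that H_meas
    by (intro borel_measurable_divide borel_measurable_sum) auto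
  have ws_m: "(\<lambda>\<omega>. ws H n \<omega> (score V \<omega>) i) \<in> borel_measurable ?M" if "i \<in> ?I" for i
    unfolding ws_def
  proof (intro borel_measurable_sum)
    fix j assume j: "j \<in> ?I"
    show "(\<lambda>\<omega>. if score V \<omega> j < score V \<omega> i then pH H n \<omega> i j else 0) \<in> borel_measurable ?M"
      by (rule measurable_If[OF pH_m[OF that j] borel_measurable_const borel_measurable_less[OF sc_m[OF j] sc_m[OF that]]])
  qed
  have c_m: "c g \<in> borel_measurable ?M" if "g \<in> G" for g
    unfolding c_def[abs_def] using that pH_m unfolding G_def
    by (intro borel_measurable_sum) auto
  have ok_m: "{\<omega> \<in> space ?M. ok \<omega> (a \<omega>)} \<in> sets ?M" if am: "a \<in> borel_measurable ?M" for a
  proof -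
    have cm: "(\<lambda>\<omega>. cnt H n \<omega> (score V \<omega>) (a \<omega>)) \<in> borel_measurable ?M"
      unfolding cnt_def
    proof (intro borel_measurable_sum)
      fix i assume i: "i \<in> ?I"
      show "(\<lambda>\<omega>. if ws H n \<omega> (score V \<omega>) i < a \<omega> then 1 else 0::real) \<in> borel_measurable ?M"
        by (rule measurable_If[OF borel_measurable_const borel_measurable_const borel_measurable_less[OF ws_m[OF i] am]])
    qed
    have cm2: "(\<lambda>\<omega>. (1 / real (n+1)) * cnt H n \<omega> (score V \<omega>) (a \<omega>)) \<in> borel_measurable ?M"
      by (rule borel_measurable_times[OF borel_measurable_const cm])
    show ?thesis unfolding ok_def by (rule borel_measurable_le[OF borel_measurable_const cm2])
  qed
  have Gfin: "finite G" unfolding G_def by auto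
  have at_props: "atl \<omega> \<in> Gamma H n \<omega>" "ok \<omega> (atl \<omega>)"
    "\<And>a. a \<in> Gamma H n \<omega> \<Longrightarrow> ok \<omega> a \<Longrightarrow> atl \<omega> \<le> a" for \<omega>
    using alpha_tilde_props[where H=H, OF Hr Hd \<alpha>(2), where n=n and \<omega>=\<omega> and V=V and v="score V \<omega> (n+1)"]
    unfolding atl_def ok_def alpha_ok_eq[where H=H, OF Hr Hd] Vaug_self by auto
  have Gam: "a \<in> Gamma H n \<omega> \<longleftrightarrow> (\<exists>g\<in>G. a = c g \<omega>)" for a \<omega>
    unfolding Gamma_eq[where H=H, OF Hr Hd] G_def c_def by auto
  have less_at: "x < atl \<omega> \<longleftrightarrow> (\<forall>g\<in>G. ok \<omega> (c g \<omega>) \<longrightarrow> x < c g \<omega>)" for x \<omega>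
  proof
    assume lt: "x < atl \<omega>"
    show "\<forall>g\<in>G. ok \<omega> (c g \<omega>) \<longrightarrow> x < c g \<omega>"
    proof (intro ballI impI)
      fix g assume g: "g \<in> G" "ok \<omega> (c g \<omega>)"
      have "c g \<omega> \<in> Gamma H n \<omega>" using Gam g(1) by blast
      then have "atl \<omega> \<le> c g \<omega>" using at_props(3) g(2) by blast
      then show "x < c g \<omega>" using lt by simp
    qed
  next
    assume h: "\<forall>g\<in>G. ok \<omega> (c g \<omega>) \<longrightarrow> x < c g \<omega>"
    obtain g where g: "g \<in> G" "atl \<omega> = c g \<omega>" using at_props(1) Gam by blast
    have "ok \<omega> (c g \<omega>)" using at_props(2)[of \<omega>] g(2) by simp
    then show "x < atl \<omega>" using h g by simp
  qed
  have E_m: "E i \<in> sets ?M" if i: "i \<in> ?I" for i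
  proof -
    have "E i = {\<omega> \<in> space ?M. \<forall>g\<in>G. ok \<omega> (c g \<omega>) \<longrightarrow> ws H n \<omega> (score V \<omega>) i < c g \<omega>}"
      unfolding E_def less_at ..
    also have "\<dots> \<in> sets ?M"
    proof (intro sets.sets_Collect_finite_All Gfin sets.sets_Collect_imp)
      fix g assume g: "g \<in> G"
      show "{\<omega> \<in> space ?M. ok \<omega> (c g \<omega>)} \<in> sets ?M" by (rule ok_m[OF c_m[OF g]])
      show "{\<omega> \<in> space ?M. ws H n \<omega> (score V \<omega>) i < c g \<omega>} \<in> sets ?M"
        by (intro borel_measurable_less c_m[OF g] ws_m[OF i])
    qed
    finally show ?thesis .
  qed
  have pw: "\<alpha> * real (n+1) \<le> (\<Sum>i\<in>?I. indicator (E i) \<omega>)" if om: "\<omega> \<in> space ?M" for \<omega>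
  proof -
    have "cnt H n \<omega> (score V \<omega>) (atl \<omega>) = (\<Sum>i\<in>?I. indicator (E i) \<omega>)"
      unfolding cnt_def E_def using om by (intro sum.cong) (auto simp: indicator_def)
    moreover have "\<alpha> \<le> (1 / real (n+1)) * cnt H n \<omega> (score V \<omega>) (atl \<omega>)"
      using at_props(2)[of \<omega>] unfolding ok_def .
    ultimately show ?thesis by (simp add: field_simps)
  qed
  have ii: "integrable ?M (indicator (E i) :: _ \<Rightarrow> real)" if "i \<in> ?I" for i
    using E_m[OF that] M.emeasure_finite[of "E i"] by (intro integrable_real_indicator) (simp_all add: less_top[symmetric])
  have isum: "integrable ?M (\<lambda>\<omega>. \<Sum>i\<in>?I. indicator (E i) \<omega> :: real)"
    by (rule Bochner_Integration.integrable_sum) (rule ii)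
  have int_le: "\<alpha> * real (n+1) \<le> (\<Sum>i\<in>?I. measure ?M (E i))"
  proof -
    have "\<alpha> * real (n+1) = (\<integral>\<omega>. \<alpha> * real (n+1) \<partial>?M)" using M.prob_space by simp
    also have "\<dots> \<le> (\<integral>\<omega>. (\<Sum>i\<in>?I. indicator (E i) \<omega>) \<partial>?M)"
      using pw isum by (intro integral_mono M.integrable_const) auto
    also have "\<dots> = (\<Sum>i\<in>?I. measure ?M (E i))"
      by (subst Bochner_Integration.integral_sum[OF ii]) (auto intro!: sum.cong simp: E_def Int_absorb2)
    finally show ?thesis .
  qed
  have msym: "measure ?M (E i) = measure ?M (E (n+1))" if i: "i \<in> ?I" for i
  proof -
    define \<tau> where "\<tau> k = (if k = i then n+1 else if k = n+1 then i else k)" for k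
    have inv: "\<And>k. k \<in> ?I \<Longrightarrow> \<tau> k \<in> ?I \<and> \<tau> (\<tau> k) = k" using i by (auto simp: \<tau>_def)
    have inj: "inj_on \<tau> ?I" by (rule inj_onI) (metis inv)
    define T where "T \<omega> = (\<lambda>k\<in>?I. \<omega> (\<tau> k))" for \<omega> :: "nat \<Rightarrow> (real ^ 'p) \<times> real"
    have Tm: "T \<in> measurable ?M ?M" unfolding T_def
      by (rule measurable_restrict) (use inv in \<open>auto intro: measurable_component_singleton\<close>)
    have dis: "distr ?M ?M T = ?M"
      unfolding T_def using distr_PiM_reindex[of ?I "\<lambda>_. P" \<tau> ?I] P inj inv by auto
    have om: "T \<omega> k = \<omega> (\<tau> k)" if "k \<in> ?I" for \<omega> k using that by (simp add: T_def)
    have ti: "\<tau> (n+1) = i" by (simp add: \<tau>_def)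
    have "E i = T -` E (n+1) \<inter> space ?M"
    proof (intro set_eqI)
      fix \<omega>
      show "\<omega> \<in> E i \<longleftrightarrow> \<omega> \<in> T -` E (n+1) \<inter> space ?M"
      proof (cases "\<omega> \<in> space ?M")
        case False then show ?thesis by (simp add: E_def)
      next
        case True
        have Ts: "T \<omega> \<in> space ?M" using measurable_space[OF Tm True] .
        have a1: "atl (T \<omega>) = atl \<omega>" unfolding atl_def
          by (rule at_perm[where H=H and \<tau>=\<tau> and \<omega>'="T \<omega>" and \<omega>=\<omega> and n=n and V=V and \<alpha>=\<alpha>, OF Hr Hd inv om]) auto
        have w1: "ws H n (T \<omega>) (score V (T \<omega>)) (n+1) = ws H n \<omega> (score V \<omega>) i"
          using ws_perm[where \<tau>=\<tau> and n=n and \<omega>=\<omega> and \<omega>'="T \<omega>" and H=H and V=V, OF inv om, of "n+1"] ti by auto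
        show ?thesis using True Ts a1 w1 by (simp add: E_def)
      qed
    qed
    moreover have En: "E (n+1) \<in> sets ?M" using E_m by simp
    ultimately have "measure ?M (E i) = measure (distr ?M ?M T) (E (n+1))"
      using measure_distr[OF Tm En] by simp
    also have "\<dots> = measure ?M (E (n+1))" using dis by simp
    finally show ?thesis .
  qed
  have "(\<Sum>i\<in>?I. measure ?M (E i)) = (\<Sum>i\<in>?I. measure ?M (E (n+1)))"
    by (rule sum.cong[OF refl msym])
  also have "\<dots> = real (n+1) * measure ?M (E (n+1))" by simp
  finally have sumeq: "(\<Sum>i\<in>?I. measure ?M (E i)) = real (n+1) * measure ?M (E (n+1))" .
  from int_le sumeq have main: "\<alpha> \<le> measure ?M (E (n+1))"
    by (simp add: mult.commute)
  have setE: "{\<omega> \<in> space ?M. score V \<omega> (n+1) \<in> CV H V n \<alpha> \<omega>} = E (n+1)"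
    unfolding E_def atl_def CV_char[where H=H, OF Hr Hd] Vaug_self ..
  have setC: "{\<omega> \<in> space ?M. snd (\<omega> (n+1)) \<in> Cset H V n \<alpha> \<omega>}
      = {\<omega> \<in> space ?M. score V \<omega> (n+1) \<in> CV H V n \<alpha> \<omega>}"
    unfolding Cset_def score_def by simp
  show ?thesis using main setE setC CV_interval[where H=H, OF Hr Hd \<alpha>(2)] by simp
qed

end
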